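(* For variables $a,b,\alpha,\beta$, any natural number $n\ge1$ and any admissible $r$ ($0\le r\le\lfloor n/2\rfloor$ for $\Psi$, $0\le r\le\lfloor (n-1)/2\rfloor$ for $\Phi$), \[ \Psi\left(\begin{array}{cc|c} a & b & n \\ \alpha & \beta & r \end{array}\right)=\frac{(-1)^r}{r!}\Big(\alpha\frac{\partial}{\partial a}+\beta\frac{\partial}{\partial b}\Big)^r\Psi(a,b,n)=\frac{(-1)^r}{(\lfloor n/2\rfloor-r)!}\Big(a\frac{\partial}{\partial \alpha}+b\frac{\partial}{\partial \beta}\Big)^{\lfloor n/2\rfloor-r}\Psi(\alpha,\beta,n), \] \[ \Phi\left(\begin{array}{cc|c} a & b & n \\ \alpha & \beta & r \end{array}\right)=\frac{(-1)^r}{r!}\Big(\alpha\frac{\partial}{\partial a}+\beta\frac{\partial}{\partial b}\Big)^r\Phi(a,b,n)=\frac{(-1)^r}{(\lfloor (n-1)/2\rfloor-r)!}\Big(a\frac{\partial}{\partial \alpha}+b\frac{\partial}{\partial \beta}\Big)^{\lfloor (n-1)/2\rfloor-r}\Phi(\alpha,\beta,n). \]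
   Context: $\delta(m)=1$ for $m$ odd, $0$ for $m$ even; $\lfloor\cdot\rfloor$ is the floor. $\Psi(a,b,n)$, $\Phi(a,b,n)$ are the polynomials in $a,b$ defined by $\Psi(a,b,0)=2$, $\Psi(a,b,1)=1$, $\Psi(a,b,n+1)=(2a-b)^{\delta(n)}\Psi(a,b,n)-a\Psi(a,b,n-1)$ and $\Phi(a,b,0)=0$, $\Phi(a,b,1)=1$, $\Phi(a,b,n+1)=(2a-b)^{\delta(n+1)}\Phi(a,b,n)-a\Phi(a,b,n-1)$. For indeterminates $a,b,\alpha,\beta$ and $n\ge1$, $\Psi\left(\begin{array}{cc|c} a & b & n \\ \alpha & \beta & r \end{array}\right)$ and $\Phi\left(\begin{array}{cc|c} a & b & n \\ \alpha & \beta & r \end{array}\right)$ are the unique polynomials in $\mathbb{Z}[a,b,\alpha,\beta]$ such that, identically in $x,y$, $(\beta a-\alpha b)^{\lfloor n/2\rfloor}\frac{x^n+y^n}{(x+y)^{\delta(n)}}=\sum_{r=0}^{\lfloor n/2\rfloor}\Psi\left(\begin{array}{cc|c} a & b & n \\ \alpha & \beta & r \end{array}\right)(\alpha x^2+\beta xy+\alpha y^2)^{\lfloor n/2\rfloor-r}(ax^2+bxy+ay^2)^r$ and $(\beta a-\alpha b)^{\lfloor (n-1)/2\rfloor}\frac{x^n-y^n}{(x-y)(x+y)^{\delta(n-1)}}=\sum_{r=0}^{\lfloor (n-1)/2\rfloor}\Phi\left(\begin{array}{cc|c} a & b & n \\ \alpha & \beta & r \end{array}\right)(\alpha x^2+\beta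 xy+\alpha y^2)^{\lfloor (n-1)/2\rfloor-r}(ax^2+bxy+ay^2)^r$. *)

theory Defs
  imports "HOL-Computational_Algebra.Polynomial"
begin

text \<open>Polynomials in Z[a,b,alpha,beta] are represented as nested univariate
polynomials: the outermost variable is beta, then alpha, then b, innermost a.\<close>

type_synonym mp4 = "int poly poly poly poly"

definition Xbeta :: mp4 where "Xbeta = [:0, 1:]"
definition Xalpha :: mp4 where "Xalpha = [:[:0, 1:]:]"
definition Xb :: mp4 where "Xb = [:[:[:0, 1:]:]:]"
definition Xa :: mp4 where "Xa = [:[:[:[:0, 1:]:]:]:]"

definition Dbeta :: "mp4 \<Rightarrow> mp4" where "Dbeta p = pderiv p"
definition Dalpha :: "mp4 \<Rightarrow> mp4" where "Dalpha p = map_poly pderiv p"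
definition Db :: "mp4 \<Rightarrow> mp4" where "Db p = map_poly (map_poly pderiv) p"
definition Da :: "mp4 \<Rightarrow> mp4" where "Da p = map_poly (map_poly (map_poly pderiv)) p"

definition L1 :: "mp4 \<Rightarrow> mp4" where "L1 p = Xalpha * Da p + Xbeta * Db p"
definition L2 :: "mp4 \<Rightarrow> mp4" where "L2 p = Xa * Dalpha p + Xb * Dbeta p"

definition delta :: "nat \<Rightarrow> nat" where "delta m = (if odd m then 1 else 0)"

fun Psi :: "'a::comm_ring_1 \<Rightarrow> 'a \<Rightarrow> nat \<Rightarrow> 'a" where
  "Psi a b 0 = 2"
| "Psi a b (Suc 0) = 1"
| "Psi a b (Suc (Suc n)) =
     (2 * a - b) ^ delta (Suc n) * Psi a b (Suc n) - a * Psi a b n"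

fun Phi :: "'a::comm_ring_1 \<Rightarrow> 'a \<Rightarrow> nat \<Rightarrow> 'a" where
  "Phi a b 0 = 0"
| "Phi a b (Suc 0) = 1"
| "Phi a b (Suc (Suc n)) =
     (2 * a - b) ^ delta (Suc (Suc n)) * Phi a b (Suc n) - a * Phi a b n"

definition Qab :: "mp4 \<Rightarrow> mp4 \<Rightarrow> mp4" where
  "Qab x y = Xalpha * x^2 + Xbeta * x * y + Xalpha * y^2"
definition Qa :: "mp4 \<Rightarrow> mp4 \<Rightarrow> mp4" where
  "Qa x y = Xa * x^2 + Xb * x * y + Xa * y^2"

text \<open>The bracket polynomials, as the unique coefficient families
(indexed by r, zero beyond the admissible range) satisfying the defining
identity for all x, y (division by (x+y)^delta, (x-y) cleared).\<close>
definition PsiBr :: "nat \<Rightarrow> nat \<Rightarrow> mp4" where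
  "PsiBr n = (THE c. (\<forall>r > n div 2. c r = 0) \<and>
     (\<forall>x y. (Xbeta * Xa - Xalpha * Xb) ^ (n div 2) * (x ^ n + y ^ n) =
        (x + y) ^ delta n *
        (\<Sum>r\<le>n div 2. c r * Qab x y ^ (n div 2 - r) * Qa x y ^ r)))"

definition PhiBr :: "nat \<Rightarrow> nat \<Rightarrow> mp4" where
  "PhiBr n = (THE c. (\<forall>r > (n - 1) div 2. c r = 0) \<and>
     (\<forall>x y. (Xbeta * Xa - Xalpha * Xb) ^ ((n - 1) div 2) * (x ^ n - y ^ n) =
        (x - y) * (x + y) ^ delta (n - 1) *
        (\<Sum>r\<le>(n - 1) div 2. c r * Qab x y ^ ((n - 1) div 2 - r) * Qa x y ^ r)))"

end

theory Submission
  imports Defs "HOL-Computational_Algebra.Fraction_Field"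
begin


lemma delta_simps: "delta (Suc n) = (if odd n then 0 else 1)" "delta 0 = 0"
  by (auto simp: delta_def)

lemma ind2: "P 0 \<Longrightarrow> P (Suc 0) \<Longrightarrow> (\<And>n. P n \<Longrightarrow> P (Suc n) \<Longrightarrow> P (Suc (Suc n))) \<Longrightarrow> P n"
  by (induction n rule: nat_less_induct) (metis Suc_lessD lessI not0_implies_Suc)

lemma Psi_xy:
  fixes x y :: "'a::comm_ring_1"
  shows "x ^ n + y ^ n = (x + y) ^ delta n * Psi (x*y) (-(x^2+y^2)) n"
proof (induction n rule: ind2)
  case (3 n)
  have e: "x ^ Suc (Suc n) + y ^ Suc (Suc n) = (x+y)*(x^Suc n + y^Suc n) - x*y*(x^n+y^n)"
    by (simp add: algebra_simps)
  have t: "2 * (x*y) - - (x\<^sup>2 + y\<^sup>2) = (x+y)^2" by (simp add: algebra_simps power2_eq_square)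
  show ?case unfolding e 3 Psi.simps(3) t
    by (cases "odd n") (auto simp: algebra_simps power2_eq_square delta_def)
qed (auto simp: delta_def)

lemma Phi_xy:
  fixes x y :: "'a::comm_ring_1"
  shows "x ^ n - y ^ n = (x - y) * (x + y) ^ delta (n - 1) * Phi (x*y) (-(x^2+y^2)) n"
proof (induction n rule: ind2)
  case (3 n)
  have e: "x ^ Suc (Suc n) - y ^ Suc (Suc n) = (x+y)*(x^Suc n - y^Suc n) - x*y*(x^n-y^n)"
    by (simp add: algebra_simps)
  have t: "2 * (x*y) - - (x\<^sup>2 + y\<^sup>2) = (x+y)^2" by (simp add: algebra_simps power2_eq_square)
  show ?case
  proof (cases n)
    case 0 then show ?thesis by (simp add: algebra_simps power2_eq_square delta_def)
  next
    case (Suc k)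
    show ?thesis unfolding e 3 Phi.simps(3) t using Suc
      by (cases "odd k") (auto simp: algebra_simps power2_eq_square delta_def)
  qed
qed (auto simp: delta_def)

lemma Psi_hom:
  fixes t :: "'a::comm_ring_1"
  shows "Psi (t*a) (t*b) n = t ^ (n div 2) * Psi a b n"
proof (induction n rule: ind2)
  case (3 n)
  show ?case
  proof (cases "odd n")
    case True
    then have "Suc (Suc n) div 2 = Suc (n div 2)" "Suc n div 2 = Suc (n div 2)" by presburger+
    then show ?thesis using True 3 by (simp add: algebra_simps delta_def)
  next
    case False
    then have "Suc (Suc n) div 2 = Suc (n div 2)" "Suc n div 2 = n div 2" by presburger+
    then show ?thesis using False 3 by (simp add: algebra_simps delta_def)
  qed
qed auto

lemma Phi_hom:
  fixes t :: "'a::comm_ring_1"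
  shows "Phi (t*a) (t*b) n = t ^ ((n - 1) div 2) * Phi a b n"
proof (induction n rule: ind2)
  case (3 n)
  show ?case
  proof (cases "n = 0")
    case True then show ?thesis by (simp add: delta_def)
  next
    case nz: False
    have s: "Phi (t*a) (t*b) (Suc (Suc n)) = (2 * (t*a) - t*b) ^ delta (Suc (Suc n)) * (t ^ ((Suc n - 1) div 2) * Phi a b (Suc n)) - t*a * (t ^ ((n - 1) div 2) * Phi a b n)"
      unfolding Phi.simps(3) 3 ..
    show ?thesis
    proof (cases "odd n")
      case True
      then have "(Suc (Suc n) - 1) div 2 = Suc ((n - 1) div 2)" "(Suc n - 1) div 2 = ((n-1) div 2)" using nz by presburger+
      then show ?thesis unfolding s using True by (simp add: algebra_simps delta_def)
    next
      case False
      then have "(Suc (Suc n) - 1) div 2 = Suc ((n - 1) div 2)" "(Suc n - 1) div 2 = Suc ((n-1) div 2)" using nz by presburger+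
      then show ?thesis unfolding s using False by (simp add: algebra_simps delta_def)
    qed
  qed
qed auto


definition H :: "nat \<Rightarrow> 'a::comm_ring_1 poly \<Rightarrow> 'a \<Rightarrow> 'a \<Rightarrow> 'a" where
  "H d p U V = (\<Sum>r\<le>d. coeff p r * U^(d-r) * V^r)"

lemma H_diff: "H d (p - q) U V = H d p U V - H d q U V"
  unfolding H_def by (simp add: sum_subtractf algebra_simps)

lemma H_const: "H 0 [:c:] U V = c"
  unfolding H_def by simp

lemma H_lin:
  assumes "degree p \<le> d"
  shows "H (Suc d) ([:A0,A1:] * p) U V = (A0*U + A1*V) * H d p U V"
proof -
  have m: "[:A0,A1:] * p = smult A0 p + pCons 0 (smult A1 p)"
    by (simp add: mult_pCons_left)
  have z: "coeff p (Suc d) = 0" using assms by (simp add: coeff_eq_0)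
  have s1: "(\<Sum>r\<le>Suc d. coeff (smult A0 p) r * U^(Suc d-r) * V^r) = A0*U * H d p U V"
    unfolding H_def using z
    by (simp add: sum_distrib_left Suc_diff_le algebra_simps)
  have s2: "(\<Sum>r\<le>Suc d. coeff (pCons 0 (smult A1 p)) r * U^(Suc d-r) * V^r) = A1*V * H d p U V"
    unfolding H_def sum.atMost_Suc_shift
    by (simp add: sum_distrib_left algebra_simps)
  show ?thesis
    unfolding m H_def[of "Suc d"] coeff_add distrib_right sum.distrib
    using s1 s2 by (simp add: algebra_simps)
qed

lemma two_poly: "(2::'a::comm_ring_1 poly) = [:2:]"
  by (metis add_pCons one_add_one one_pCons add_0_left)

lemma lin2: "2 * [:A0,A1:] - [:B0,B1:] = [:2*A0 - B0, 2*A1 - B1:]"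
  unfolding mult_2 by (simp add: algebra_simps mult_2)

lemma Psi_expand:
  fixes A0 :: "'a::comm_ring_1"
  shows "Psi (A0*U + A1*V) (B0*U + B1*V) n = H (n div 2) (Psi [:A0,A1:] [:B0,B1:] n) U V
     \<and> degree (Psi [:A0,A1:] [:B0,B1:] n) \<le> n div 2"
proof (induction n rule: ind2)
  case 1 then show ?case by (simp add: H_def two_poly)
next
  case 2 then show ?case by (simp add: H_def)
next
  case (3 n)
  let ?P = "Psi [:A0,A1:] [:B0,B1:]"
  let ?A = "A0*U + A1*V" and ?B = "B0*U + B1*V"
  have d1: "degree ([:A0,A1:] * ?P n) \<le> Suc (n div 2)"
    using degree_mult_le[of "[:A0,A1:]" "?P n"] 3 by (cases "A1 = 0") auto
  have h1: "H (Suc (n div 2)) ([:A0,A1:] * ?P n) U V = ?A * Psi ?A ?B n"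
    using H_lin 3 by metis
  show ?case
  proof (cases "odd n")
    case True
    then have e: "Suc (Suc n) div 2 = Suc (n div 2)" "Suc n div 2 = Suc (n div 2)" by presburger+
    have dd: "delta (Suc n) = 0" using True by (simp add: delta_def)
    have eA: "Psi ?A ?B (Suc (Suc n)) = Psi ?A ?B (Suc n) - ?A * Psi ?A ?B n"
      unfolding Psi.simps dd by simp
    have eP: "?P (Suc (Suc n)) = ?P (Suc n) - [:A0,A1:] * ?P n"
      unfolding Psi.simps dd by simp
    show ?thesis unfolding e eA eP H_diff h1
      using 3 d1 unfolding e by (auto intro: order.trans[OF degree_diff_le_max])
  next
    case False
    then have e: "Suc (Suc n) div 2 = Suc (n div 2)" "Suc n div 2 = n div 2" by presburger+
    have dd: "delta (Suc n) = 1" using False by (simp add: delta_def)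
    have d2: "degree ([:2*A0 - B0, 2*A1 - B1:] * ?P (Suc n)) \<le> Suc (n div 2)"
      using degree_mult_le[of "[:2*A0 - B0, 2*A1 - B1:]" "?P (Suc n)"] 3 e by (cases "2*A1 - B1 = 0") auto
    have x: "2 * ?A - ?B = (2*A0 - B0) * U + (2*A1 - B1) * V" by (simp add: algebra_simps)
    have h2: "H (Suc (n div 2)) ([:2*A0 - B0, 2*A1 - B1:] * ?P (Suc n)) U V = (2 * ?A - ?B) * Psi ?A ?B (Suc n)"
      unfolding x using H_lin 3 e by metis
    have eA: "Psi ?A ?B (Suc (Suc n)) = (2 * ?A - ?B) * Psi ?A ?B (Suc n) - ?A * Psi ?A ?B n"
      unfolding Psi.simps dd by simp
    have eP: "?P (Suc (Suc n)) = [:2*A0 - B0, 2*A1 - B1:] * ?P (Suc n) - [:A0,A1:] * ?P n"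
      unfolding Psi.simps dd lin2 by simp
    show ?thesis unfolding e eA eP H_diff h1 h2
      using d1 d2 by (auto intro: order.trans[OF degree_diff_le_max])
  qed
qed

lemma Phi_expand:
  fixes A0 :: "'a::comm_ring_1"
  shows "Phi (A0*U + A1*V) (B0*U + B1*V) n = H ((n - 1) div 2) (Phi [:A0,A1:] [:B0,B1:] n) U V
     \<and> degree (Phi [:A0,A1:] [:B0,B1:] n) \<le> (n - 1) div 2"
proof (induction n rule: ind2)
  case 1 then show ?case by (simp add: H_def)
next
  case 2 then show ?case by (simp add: H_def)
next
  case (3 n)
  let ?P = "Phi [:A0,A1:] [:B0,B1:]"
  let ?A = "A0*U + A1*V" and ?B = "B0*U + B1*V"
  show ?case
  proof (cases "n = 0")
    case True then show ?thesis by (simp add: H_def delta_def)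
  next
    case nz: False
  have d1: "degree ([:A0,A1:] * ?P n) \<le> Suc ((n - 1) div 2)"
    using degree_mult_le[of "[:A0,A1:]" "?P n"] 3 by (cases "A1 = 0") auto
  have h1: "H (Suc ((n - 1) div 2)) ([:A0,A1:] * ?P n) U V = ?A * Phi ?A ?B n"
    using H_lin 3 by metis
  show ?thesis
  proof (cases "even n")
    case True
    then have e: "(Suc (Suc n) - 1) div 2 = Suc ((n - 1) div 2)" "(Suc n - 1) div 2 = Suc ((n - 1) div 2)" using nz by presburger+
    have dd: "delta (Suc (Suc n)) = 0" using True by (simp add: delta_def)
    have eA: "Phi ?A ?B (Suc (Suc n)) = Phi ?A ?B (Suc n) - ?A * Phi ?A ?B n"
      unfolding Phi.simps dd by simp
    have eP: "?P (Suc (Suc n)) = ?P (Suc n) - [:A0,A1:] * ?P n"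
      unfolding Phi.simps dd by simp
    show ?thesis unfolding e eA eP H_diff h1
      using 3 d1 unfolding e by (auto intro: order.trans[OF degree_diff_le_max])
  next
    case False
    then have e: "(Suc (Suc n) - 1) div 2 = Suc ((n - 1) div 2)" "(Suc n - 1) div 2 = (n - 1) div 2" using nz by presburger+
    have dd: "delta (Suc (Suc n)) = 1" using False by (simp add: delta_def)
    have d2: "degree ([:2*A0 - B0, 2*A1 - B1:] * ?P (Suc n)) \<le> Suc ((n - 1) div 2)"
      using degree_mult_le[of "[:2*A0 - B0, 2*A1 - B1:]" "?P (Suc n)"] 3 e by (cases "2*A1 - B1 = 0") auto
    have x: "2 * ?A - ?B = (2*A0 - B0) * U + (2*A1 - B1) * V" by (simp add: algebra_simps)
    have h2: "H (Suc ((n - 1) div 2)) ([:2*A0 - B0, 2*A1 - B1:] * ?P (Suc n)) U V = (2 * ?A - ?B) * Phi ?A ?B (Suc n)"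
      unfolding x using H_lin 3 e by metis
    have eA: "Phi ?A ?B (Suc (Suc n)) = (2 * ?A - ?B) * Phi ?A ?B (Suc n) - ?A * Phi ?A ?B n"
      unfolding Phi.simps dd by simp
    have eP: "?P (Suc (Suc n)) = [:2*A0 - B0, 2*A1 - B1:] * ?P (Suc n) - [:A0,A1:] * ?P n"
      unfolding Phi.simps dd lin2 by simp
    show ?thesis unfolding e eA eP H_diff h1 h2
      using d1 d2 by (auto intro: order.trans[OF degree_diff_le_max])
  qed
  qed
qed



definition is_der :: "('a::comm_ring_1 \<Rightarrow> 'a) \<Rightarrow> bool" where
  "is_der D \<longleftrightarrow> (\<forall>x y. D (x+y) = D x + D y) \<and> (\<forall>x y. D (x*y) = x * D y + D x * y)"

lemma der_add: "is_der D \<Longrightarrow> D (x+y) = D x + D y" by (simp add: is_der_def)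
lemma der_mult: "is_der D \<Longrightarrow> D (x*y) = x * D y + D x * y" by (simp add: is_der_def)
lemma der_0: "is_der D \<Longrightarrow> D 0 = 0"
  using der_add[of D 0 0] by simp
lemma der_1: "is_der D \<Longrightarrow> D 1 = 0"
  using der_mult[of D 1 1] by simp
lemma der_neg: "is_der D \<Longrightarrow> D (-x) = - D x"
  using der_add[of D x "-x"] der_0[of D] by (metis neg_eq_iff_add_eq_0 add.right_inverse)
lemma der_diff: "is_der D \<Longrightarrow> D (x-y) = D x - D y"
  using der_add[of D x "-y"] der_neg[of D y] by simp
lemma der_2: "is_der D \<Longrightarrow> D 2 = 0"
  using der_add[of D 1 1] der_1[of D] by (metis add_0 one_add_one)
lemma der_nat: "is_der D \<Longrightarrow> D (of_nat k * x) = of_nat k * D x"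
  by (induction k) (auto simp: der_add der_0 algebra_simps)
lemma der_sign: "is_der D \<Longrightarrow> D ((-1)^k * x) = (-1)^k * D x"
  by (induction k) (auto simp: der_neg)

lemma der_neg_der: "is_der D \<Longrightarrow> is_der (\<lambda>x. - D x)"
  by (simp add: is_der_def algebra_simps)

lemma der_lin: "is_der D1 \<Longrightarrow> is_der D2 \<Longrightarrow> is_der (\<lambda>x. c * D1 x + d * D2 x)"
  by (simp add: is_der_def algebra_simps)

lemma der_pderiv: "is_der (pderiv :: 'a::idom poly \<Rightarrow> _)"
  by (simp add: is_der_def pderiv_add pderiv_mult algebra_simps)

lemma der_map_poly:
  assumes D: "is_der D"
  shows "is_der (map_poly D)"
proof -
  have z: "D 0 = 0" using D by (rule der_0)
  have sum: "D (sum f A) = (\<Sum>a\<in>A. D (f a))" for f :: "nat \<Rightarrow> _" and A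
    by (induction A rule: infinite_finite_induct) (auto simp: z der_add[OF D])
  show ?thesis unfolding is_der_def
  proof (intro conjI allI)
    fix x y
    show "map_poly D (x + y) = map_poly D x + map_poly D y"
      by (rule poly_eqI) (simp add: coeff_map_poly z der_add[OF D])
    show "map_poly D (x * y) = x * map_poly D y + map_poly D x * y"
    proof (rule poly_eqI)
      fix n
      have "coeff (map_poly D (x * y)) n = (\<Sum>i\<le>n. D (coeff x i * coeff y (n - i)))"
        by (simp add: coeff_map_poly z coeff_mult sum)
      also have "\<dots> = (\<Sum>i\<le>n. coeff x i * D (coeff y (n - i))) + (\<Sum>i\<le>n. D (coeff x i) * coeff y (n - i))"
        by (simp add: der_mult[OF D] sum.distrib)
      also have "\<dots> = coeff (x * map_poly D y + map_poly D x * y) n"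
        by (simp only: coeff_add coeff_mult coeff_map_poly z)
      finally show "coeff (map_poly D (x * y)) n = coeff (x * map_poly D y + map_poly D x * y) n" .
    qed
  qed
qed

lemma der_agree_Psi:
  assumes D1: "is_der D1" and D2: "is_der D2" and "D1 A = D2 A" "D1 B = D2 B"
  shows "D1 (Psi A B n) = D2 (Psi A B n)"
proof -
  have m: "D1 (x*y) = D2 (x*y)" if "D1 x = D2 x" "D1 y = D2 y" for x y
    using that by (simp add: der_mult[OF D1] der_mult[OF D2])
  have d: "D1 (x-y) = D2 (x-y)" if "D1 x = D2 x" "D1 y = D2 y" for x y
    using that by (simp add: der_diff[OF D1] der_diff[OF D2])
  have p: "D1 (x^k) = D2 (x^k)" if "D1 x = D2 x" for x k
    using that by (induction k) (auto simp: der_1[OF D1] der_1[OF D2] intro: m)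
  have t: "D1 (2*A - B) = D2 (2*A - B)"
    using assms by (intro d m) (auto simp: der_2[OF D1] der_2[OF D2])
  show ?thesis
  proof (induction n rule: ind2)
    case 1 then show ?case by (simp add: der_2[OF D1] der_2[OF D2])
  next
    case 2 then show ?case by (simp add: der_1[OF D1] der_1[OF D2])
  next
    case (3 n) then show ?case unfolding Psi.simps by (intro d m p t assms)
  qed
qed

lemma der_agree_Phi:
  assumes D1: "is_der D1" and D2: "is_der D2" and "D1 A = D2 A" "D1 B = D2 B"
  shows "D1 (Phi A B n) = D2 (Phi A B n)"
proof -
  have m: "D1 (x*y) = D2 (x*y)" if "D1 x = D2 x" "D1 y = D2 y" for x y
    using that by (simp add: der_mult[OF D1] der_mult[OF D2])
  have d: "D1 (x-y) = D2 (x-y)" if "D1 x = D2 x" "D1 y = D2 y" for x y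
    using that by (simp add: der_diff[OF D1] der_diff[OF D2])
  have p: "D1 (x^k) = D2 (x^k)" if "D1 x = D2 x" for x k
    using that by (induction k) (auto simp: der_1[OF D1] der_1[OF D2] intro: m)
  have t: "D1 (2*A - B) = D2 (2*A - B)"
    using assms by (intro d m) (auto simp: der_2[OF D1] der_2[OF D2])
  show ?thesis
  proof (induction n rule: ind2)
    case 1 then show ?case by (simp add: der_0[OF D1] der_0[OF D2])
  next
    case 2 then show ?case by (simp add: der_1[OF D1] der_1[OF D2])
  next
    case (3 n) then show ?case unfolding Phi.simps by (intro d m p t assms)
  qed
qed

lemma taylor:
  assumes L: "is_der L" and P: "pderiv P = - map_poly L P"
  shows "of_nat (fact k) * coeff P k = (-1)^k * (L^^k) (coeff P 0)"
proof (induction k)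
  case 0 then show ?case by simp
next
  case (Suc k)
  have "coeff (pderiv P) k = - L (coeff P k)"
    unfolding P by (simp add: coeff_map_poly der_0[OF L])
  then have c: "of_nat (Suc k) * coeff P (Suc k) = - L (coeff P k)"
    by (simp add: coeff_pderiv)
  have "of_nat (fact (Suc k)) * coeff P (Suc k) = of_nat (fact k) * (of_nat (Suc k) * coeff P (Suc k))"
    by (simp add: algebra_simps)
  also have "\<dots> = - L (of_nat (fact k) * coeff P k)"
    unfolding c by (simp add: der_nat[OF L])
  also have "\<dots> = (-1)^Suc k * (L^^Suc k) (coeff P 0)"
    unfolding Suc by (simp add: der_sign[OF L])
  finally show ?case .
qed

lemma der_Da: "is_der Da"
proof -
  have e: "Da = map_poly (map_poly (map_poly pderiv))" by (rule ext) (simp add: Da_def)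
  show ?thesis unfolding e by (intro der_map_poly der_pderiv)
qed
lemma der_Db: "is_der Db"
proof -
  have e: "Db = map_poly (map_poly pderiv)" by (rule ext) (simp add: Db_def)
  show ?thesis unfolding e by (intro der_map_poly der_pderiv)
qed
lemma der_Dalpha: "is_der Dalpha"
proof -
  have e: "Dalpha = map_poly pderiv" by (rule ext) (simp add: Dalpha_def)
  show ?thesis unfolding e by (intro der_map_poly der_pderiv)
qed
lemma der_Dbeta: "is_der Dbeta"
proof -
  have e: "Dbeta = pderiv" by (rule ext) (simp add: Dbeta_def)
  show ?thesis unfolding e by (intro der_pderiv)
qed
lemma der_L1: "is_der L1"
proof -
  have e: "L1 = (\<lambda>p. Xalpha * Da p + Xbeta * Db p)" by (rule ext) (simp add: L1_def)
  show ?thesis unfolding e by (intro der_lin der_Da der_Db)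
qed
lemma der_L2: "is_der L2"
proof -
  have e: "L2 = (\<lambda>p. Xa * Dalpha p + Xb * Dbeta p)" by (rule ext) (simp add: L2_def)
  show ?thesis unfolding e by (intro der_lin der_Dalpha der_Dbeta)
qed

lemma mp_z: "pderiv (0::'a::idom poly) = 0" "map_poly pderiv (0::'a::idom poly poly) = 0"
   "map_poly (map_poly pderiv) (0::'a::idom poly poly poly) = 0" by simp_all

lemma mp_one: "map_poly pderiv (1::'a::idom poly poly) = 0" "map_poly (map_poly pderiv) (1::'a::idom poly poly poly) = 0"
  "[:[:1:]:] = (1::'a::idom poly poly)"
  by (subst one_pCons; simp add: map_poly_pCons)+

lemma L1_vals: "L1 Xa = Xalpha" "L1 Xb = Xbeta" "L1 Xalpha = 0" "L1 Xbeta = 0"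
  by (simp_all add: mp_one map_poly_pCons mp_z pderiv_pCons L1_def Da_def Db_def Xa_def Xb_def Xalpha_def Xbeta_def)
lemma L2_vals: "L2 Xa = 0" "L2 Xb = 0" "L2 Xalpha = Xa" "L2 Xbeta = Xb"
  by (simp_all add: mp_one map_poly_pCons mp_z pderiv_pCons L2_def Dalpha_def Dbeta_def Xa_def Xb_def Xalpha_def Xbeta_def)



definition phi :: "mp4 \<Rightarrow> mp4 fract" where "phi x = Fract x 1"

lemma phi_add: "phi (x + y) = phi x + phi y" by (simp add: phi_def)
lemma phi_mult: "phi (x * y) = phi x * phi y" by (simp add: phi_def)
lemma phi_0: "phi 0 = 0" by (simp add: phi_def Zero_fract_def)
lemma phi_1: "phi 1 = 1" by (simp add: phi_def One_fract_def)
lemma phi_pow: "phi (x ^ k) = phi x ^ k" by (induction k) (auto simp: phi_mult phi_1)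
lemma phi_sum: "phi (sum f A) = (\<Sum>a\<in>A. phi (f a))"
  by (induction A rule: infinite_finite_induct) (auto simp: phi_0 phi_add)
lemma phi_inj: "phi x = phi y \<longleftrightarrow> x = y" by (simp add: phi_def eq_fract)

definition ev :: "mp4 \<Rightarrow> int" where "ev p = poly (poly (poly (poly p 1) 0) 0) 1"

lemma ev_U: "ev (Qab (of_nat k) 1) = int k"
  by (simp add: ev_def Qab_def Xalpha_def Xbeta_def)
lemma ev_V: "ev (Qa (of_nat k) 1) = int k ^ 2 + 1"
  by (simp add: ev_def Qa_def Xa_def Xb_def)
lemma ev_mult: "ev (x * y) = ev x * ev y" by (simp add: ev_def)
lemma ev_0: "ev 0 = 0" by (simp add: ev_def)

lemma uniq:
  fixes e :: "nat \<Rightarrow> mp4"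
  assumes h: "\<And>k::nat. k \<ge> 2 \<Longrightarrow> (\<Sum>r\<le>m. e r * Qab (of_nat k) 1 ^ (m-r) * Qa (of_nat k) 1 ^ r) = 0"
    and r: "r \<le> m"
  shows "e r = 0"
proof -
  define U where "U k = Qab (of_nat k) 1" for k :: nat
  define V where "V k = Qa (of_nat k) 1" for k :: nat
  define w where "w k = phi (V k) / phi (U k)" for k
  define q where "q = (\<Sum>r\<le>m. monom (phi (e r)) r)"
  have Unz: "phi (U k) \<noteq> 0" if "k \<ge> 2" for k
  proof
    assume "phi (U k) = 0"
    then have "U k = 0" using phi_inj phi_0 by metis
    then have "ev (U k) = 0" by (simp add: ev_0)
    then show False using that by (simp add: U_def ev_U)
  qed
  have root: "poly q (w k) = 0" if k: "k \<ge> 2" for k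
  proof -
    have "phi (U k) ^ m * poly q (w k) = (\<Sum>r\<le>m. phi (e r) * (phi (U k) ^ m * w k ^ r))"
      by (simp add: q_def poly_sum poly_monom sum_distrib_left algebra_simps)
    also have "\<dots> = (\<Sum>r\<le>m. phi (e r) * (phi (U k) ^ (m - r) * phi (V k) ^ r))"
    proof (rule sum.cong[OF refl])
      fix j assume "j \<in> {..m}"
      then have "phi (U k) ^ m = phi (U k) ^ (m - j) * phi (U k) ^ j"
        by (simp flip: power_add)
      then show "phi (e j) * (phi (U k) ^ m * w k ^ j) = phi (e j) * (phi (U k) ^ (m - j) * phi (V k) ^ j)"
        using Unz[OF k] by (simp add: w_def power_divide)
    qed
    also have "\<dots> = phi (\<Sum>r\<le>m. e r * U k ^ (m-r) * V k ^ r)"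
      by (simp add: phi_sum phi_mult phi_pow algebra_simps)
    also have "\<dots> = 0" using h[OF k] by (simp add: U_def V_def phi_0)
    finally show ?thesis using Unz[OF k] by simp
  qed
  have winj: "inj_on w {2..}"
  proof (rule inj_onI)
    fix j k assume j: "j \<in> {2::nat..}" and k: "k \<in> {2..}" and eq: "w j = w k"
    have "phi (V j) * phi (U k) = phi (V k) * phi (U j)"
      using eq Unz j k by (simp add: w_def field_simps)
    then have "V j * U k = V k * U j" by (simp add: phi_inj flip: phi_mult)
    then have "ev (V j) * ev (U k) = ev (V k) * ev (U j)" by (metis ev_mult)
    then have e2: "(int j ^ 2 + 1) * int k = (int k ^ 2 + 1) * int j"
      by (simp add: U_def V_def ev_U ev_V)
    have "(int j - int k) * (int j * int k - 1) = 0"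
      using e2 by (simp add: algebra_simps power2_eq_square)
    moreover have "int j * int k \<ge> 2 * 2" using j k
      by (intro mult_mono) auto
    ultimately show "j = k" by simp
  qed
  have "infinite (w ` {2..})"
    using winj finite_imageD infinite_Ici by blast
  moreover have "w ` {2..} \<subseteq> {x. poly q x = 0}" using root by auto
  ultimately have "q = 0" using poly_roots_finite finite_subset by blast
  then have "coeff q r = 0" by simp
  moreover have "coeff q r = phi (e r)"
    using r by (simp add: q_def coeff_sum)
  ultimately show ?thesis using phi_inj phi_0 by metis
qed



lemma poly_Psi: "poly (Psi A B n) x = Psi (poly A x) (poly B x) n"
  by (induction n rule: ind2) auto
lemma poly_Phi: "poly (Phi A B n) x = Phi (poly A x) (poly B x) n"
  by (induction n rule: ind2) auto

lemma sum_rev: "(\<Sum>j\<le>m. f j) = (\<Sum>r\<le>(m::nat). f (m - r))"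
  by (rule sum.reindex_bij_witness[where i="\<lambda>r. m - r" and j="\<lambda>r. m - r"]) auto

lemma sign: "r \<le> m \<Longrightarrow> (-1::'a::comm_ring_1)^m * (-1)^(m-r) = (-1)^r"
proof -
  assume "r \<le> m"
  then obtain d where m: "m = r + d" by (metis le_Suc_ex)
  have "(-1::'a)^d * (-1)^d = 1" by (simp flip: power_add)
  then show ?thesis unfolding m by (simp add: power_add mult.assoc)
qed

abbreviation DD :: mp4 where "DD \<equiv> Xbeta * Xa - Xalpha * Xb"

lemma DD1: "DD * (x*y) = Xa * Qab x y + (-Xalpha) * Qa x y"
  unfolding Qab_def Qa_def by (simp add: algebra_simps power2_eq_square)
lemma DD2: "DD * (-(x^2+y^2)) = Xb * Qab x y + (-Xbeta) * Qa x y"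
  unfolding Qab_def Qa_def by (simp add: algebra_simps power2_eq_square)

lemma taylor_L1_Psi:
  "of_nat (fact k) * coeff (Psi [:Xa,-Xalpha:] [:Xb,-Xbeta:] n) k = (-1)^k * (L1^^k) (Psi Xa Xb n)"
proof -
  have L: "is_der (\<lambda>x. - map_poly L1 x)" by (intro der_neg_der der_map_poly der_L1)
  have z: "L1 0 = 0" by (rule der_0[OF der_L1])
  have "pderiv (Psi [:Xa,-Xalpha:] [:Xb,-Xbeta:] n) = - map_poly L1 (Psi [:Xa,-Xalpha:] [:Xb,-Xbeta:] n)"
    using der_agree_Psi[OF der_pderiv L]
    by (simp add: pderiv_pCons map_poly_pCons z L1_vals der_neg[OF der_L1])
  from taylor[OF der_L1 this, of k] show ?thesis
    by (simp add: poly_0_coeff_0[symmetric] poly_Psi)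
qed

lemma taylor_L2_Psi:
  "of_nat (fact k) * coeff (Psi [:Xalpha,-Xa:] [:Xbeta,-Xb:] n) k = (-1)^k * (L2^^k) (Psi Xalpha Xbeta n)"
proof -
  have L: "is_der (\<lambda>x. - map_poly L2 x)" by (intro der_neg_der der_map_poly der_L2)
  have z: "L2 0 = 0" by (rule der_0[OF der_L2])
  have "pderiv (Psi [:Xalpha,-Xa:] [:Xbeta,-Xb:] n) = - map_poly L2 (Psi [:Xalpha,-Xa:] [:Xbeta,-Xb:] n)"
    using der_agree_Psi[OF der_pderiv L]
    by (simp add: pderiv_pCons map_poly_pCons z L2_vals der_neg[OF der_L2])
  from taylor[OF der_L2 this, of k] show ?thesis
    by (simp add: poly_0_coeff_0[symmetric] poly_Psi)
qed

lemma taylor_L1_Phi: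
  "of_nat (fact k) * coeff (Phi [:Xa,-Xalpha:] [:Xb,-Xbeta:] n) k = (-1)^k * (L1^^k) (Phi Xa Xb n)"
proof -
  have L: "is_der (\<lambda>x. - map_poly L1 x)" by (intro der_neg_der der_map_poly der_L1)
  have z: "L1 0 = 0" by (rule der_0[OF der_L1])
  have "pderiv (Phi [:Xa,-Xalpha:] [:Xb,-Xbeta:] n) = - map_poly L1 (Phi [:Xa,-Xalpha:] [:Xb,-Xbeta:] n)"
    using der_agree_Phi[OF der_pderiv L]
    by (simp add: pderiv_pCons map_poly_pCons z L1_vals der_neg[OF der_L1])
  from taylor[OF der_L1 this, of k] show ?thesis
    by (simp add: poly_0_coeff_0[symmetric] poly_Phi)
qed

lemma taylor_L2_Phi:
  "of_nat (fact k) * coeff (Phi [:Xalpha,-Xa:] [:Xbeta,-Xb:] n) k = (-1)^k * (L2^^k) (Phi Xalpha Xbeta n)"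
proof -
  have L: "is_der (\<lambda>x. - map_poly L2 x)" by (intro der_neg_der der_map_poly der_L2)
  have z: "L2 0 = 0" by (rule der_0[OF der_L2])
  have "pderiv (Phi [:Xalpha,-Xa:] [:Xbeta,-Xb:] n) = - map_poly L2 (Phi [:Xalpha,-Xa:] [:Xbeta,-Xb:] n)"
    using der_agree_Phi[OF der_pderiv L]
    by (simp add: pderiv_pCons map_poly_pCons z L2_vals der_neg[OF der_L2])
  from taylor[OF der_L2 this, of k] show ?thesis
    by (simp add: poly_0_coeff_0[symmetric] poly_Phi)
qed



lemma Psi_main:
  fixes n :: nat
  defines "m \<equiv> n div 2"
  defines "P \<equiv> Psi [:Xa,-Xalpha:] [:Xb,-Xbeta:] n"
  defines "Q \<equiv> Psi [:Xalpha,-Xa:] [:Xbeta,-Xb:] n"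
  shows "PsiBr n = coeff P" and "r \<le> m \<Longrightarrow> coeff P r = (-1)^m * coeff Q (m - r)"
proof -
  have degP: "degree P \<le> m" unfolding P_def m_def using Psi_expand by blast
  have ex: "DD ^ m * (x ^ n + y ^ n) =
        (x + y) ^ delta n * (\<Sum>r\<le>m. coeff P r * Qab x y ^ (m - r) * Qa x y ^ r)" for x y
  proof -
    have "DD ^ m * (x ^ n + y ^ n) = (x + y) ^ delta n * (DD ^ m * Psi (x*y) (-(x^2+y^2)) n)"
      by (subst Psi_xy) (simp add: algebra_simps)
    also have "DD ^ m * Psi (x*y) (-(x^2+y^2)) n = Psi (DD * (x*y)) (DD * (-(x^2+y^2))) n"
      unfolding m_def by (rule Psi_hom[symmetric])
    also have "\<dots> = H m P (Qab x y) (Qa x y)"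
      unfolding DD1 DD2 m_def P_def using Psi_expand by blast
    finally show ?thesis by (simp add: H_def)
  qed
  show "PsiBr n = coeff P"
    unfolding PsiBr_def m_def[symmetric]
  proof (rule the_equality)
    show "(\<forall>r>m. coeff P r = 0) \<and> (\<forall>x y. DD ^ m * (x ^ n + y ^ n) =
        (x + y) ^ delta n * (\<Sum>r\<le>m. coeff P r * Qab x y ^ (m - r) * Qa x y ^ r))"
      using degP ex by (auto intro: coeff_eq_0)
  next
    fix c assume c: "(\<forall>r>m. c r = 0) \<and> (\<forall>x y. DD ^ m * (x ^ n + y ^ n) =
        (x + y) ^ delta n * (\<Sum>r\<le>m. c r * Qab x y ^ (m - r) * Qa x y ^ r))"
    show "c = coeff P"
    proof
      fix r
      show "c r = coeff P r"
      proof (cases "r \<le> m")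
        case False then show ?thesis using c degP coeff_eq_0[of P r] by auto
      next
        case True
        have "c r - coeff P r = 0"
        proof (rule uniq[OF _ True])
          fix k :: nat assume k: "k \<ge> 2"
          let ?x = "of_nat k :: mp4" and ?y = "1 :: mp4"
          have nz0: "?x + ?y \<noteq> 0"
            using of_nat_eq_0_iff[where 'a=mp4, of "Suc k"] by (simp add: add.commute)
          have "(?x + ?y) ^ delta n * (\<Sum>r\<le>m. c r * Qab ?x ?y ^ (m - r) * Qa ?x ?y ^ r)
              = (?x + ?y) ^ delta n * (\<Sum>r\<le>m. coeff P r * Qab ?x ?y ^ (m - r) * Qa ?x ?y ^ r)"
            using c ex by metis
          then have "(\<Sum>r\<le>m. c r * Qab ?x ?y ^ (m - r) * Qa ?x ?y ^ r)
              = (\<Sum>r\<le>m. coeff P r * Qab ?x ?y ^ (m - r) * Qa ?x ?y ^ r)"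
            using nz0 by simp
          then show "(\<Sum>r\<le>m. (c r - coeff P r) * Qab ?x ?y ^ (m - r) * Qa ?x ?y ^ r) = 0"
            by (simp add: left_diff_distrib sum_subtractf)
        qed
        then show ?thesis by simp
      qed
    qed
  qed
  assume r: "r \<le> m"
  have "coeff P r - (-1)^m * coeff Q (m - r) = 0"
  proof (rule uniq[OF _ r])
    fix k :: nat
    let ?U = "Qab (of_nat k) 1" and ?V = "Qa (of_nat k) 1"
    have "H m P ?U ?V = Psi (Xa * ?U + (-Xalpha) * ?V) (Xb * ?U + (-Xbeta) * ?V) n"
      unfolding P_def m_def using Psi_expand by metis
    also have "\<dots> = Psi ((-1) * (Xalpha * ?V + (-Xa) * ?U)) ((-1) * (Xbeta * ?V + (-Xb) * ?U)) n"
      by (simp add: algebra_simps)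
    also have "\<dots> = (-1)^m * Psi (Xalpha * ?V + (-Xa) * ?U) (Xbeta * ?V + (-Xb) * ?U) n"
      unfolding m_def by (rule Psi_hom)
    also have "Psi (Xalpha * ?V + (-Xa) * ?U) (Xbeta * ?V + (-Xb) * ?U) n = H m Q ?V ?U"
      unfolding Q_def m_def using Psi_expand by metis
    also have "H m Q ?V ?U = (\<Sum>r\<le>m. coeff Q (m - r) * ?U ^ (m - r) * ?V ^ r)"
      unfolding H_def by (subst sum_rev) (auto intro!: sum.cong simp: algebra_simps)
    finally show "(\<Sum>r\<le>m. (coeff P r - (-1)^m * coeff Q (m - r)) * ?U ^ (m - r) * ?V ^ r) = 0"
      by (simp add: H_def left_diff_distrib sum_subtractf sum_distrib_left algebra_simps)
  qed
  then show "coeff P r = (-1)^m * coeff Q (m - r)" by simp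
qed

lemma Phi_main:
  fixes n :: nat
  defines "m \<equiv> (n - 1) div 2"
  defines "P \<equiv> Phi [:Xa,-Xalpha:] [:Xb,-Xbeta:] n"
  defines "Q \<equiv> Phi [:Xalpha,-Xa:] [:Xbeta,-Xb:] n"
  shows "PhiBr n = coeff P" and "r \<le> m \<Longrightarrow> coeff P r = (-1)^m * coeff Q (m - r)"
proof -
  have degP: "degree P \<le> m" unfolding P_def m_def using Phi_expand by blast
  have ex: "DD ^ m * (x ^ n - y ^ n) =
        (x - y) * (x + y) ^ delta (n - 1) * (\<Sum>r\<le>m. coeff P r * Qab x y ^ (m - r) * Qa x y ^ r)" for x y
  proof -
    have "DD ^ m * (x ^ n - y ^ n) = (x - y) * (x + y) ^ delta (n - 1) * (DD ^ m * Phi (x*y) (-(x^2+y^2)) n)"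
      by (subst Phi_xy) (simp add: algebra_simps)
    also have "DD ^ m * Phi (x*y) (-(x^2+y^2)) n = Phi (DD * (x*y)) (DD * (-(x^2+y^2))) n"
      unfolding m_def by (rule Phi_hom[symmetric])
    also have "\<dots> = H m P (Qab x y) (Qa x y)"
      unfolding DD1 DD2 m_def P_def using Phi_expand by blast
    finally show ?thesis by (simp add: H_def)
  qed
  show "PhiBr n = coeff P"
    unfolding PhiBr_def m_def[symmetric]
  proof (rule the_equality)
    show "(\<forall>r>m. coeff P r = 0) \<and> (\<forall>x y. DD ^ m * (x ^ n - y ^ n) =
        (x - y) * (x + y) ^ delta (n - 1) * (\<Sum>r\<le>m. coeff P r * Qab x y ^ (m - r) * Qa x y ^ r))"
      using degP ex by (auto intro: coeff_eq_0)
  next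
    fix c assume c: "(\<forall>r>m. c r = 0) \<and> (\<forall>x y. DD ^ m * (x ^ n - y ^ n) =
        (x - y) * (x + y) ^ delta (n - 1) * (\<Sum>r\<le>m. c r * Qab x y ^ (m - r) * Qa x y ^ r))"
    show "c = coeff P"
    proof
      fix r
      show "c r = coeff P r"
      proof (cases "r \<le> m")
        case False then show ?thesis using c degP coeff_eq_0[of P r] by auto
      next
        case True
        have "c r - coeff P r = 0"
        proof (rule uniq[OF _ True])
          fix k :: nat assume k: "k \<ge> 2"
          let ?x = "of_nat k :: mp4" and ?y = "1 :: mp4"
          have nz1: "?x - ?y \<noteq> 0"
            using of_nat_eq_1_iff[where 'a=mp4, of k] k by simp
          have nz0: "?x + ?y \<noteq> 0"
            using of_nat_eq_0_iff[where 'a=mp4, of "Suc k"] by (simp add: add.commute)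
          have "(?x - ?y) * (?x + ?y) ^ delta (n - 1) * (\<Sum>r\<le>m. c r * Qab ?x ?y ^ (m - r) * Qa ?x ?y ^ r)
              = (?x - ?y) * (?x + ?y) ^ delta (n - 1) * (\<Sum>r\<le>m. coeff P r * Qab ?x ?y ^ (m - r) * Qa ?x ?y ^ r)"
            using c ex by metis
          then have "(\<Sum>r\<le>m. c r * Qab ?x ?y ^ (m - r) * Qa ?x ?y ^ r)
              = (\<Sum>r\<le>m. coeff P r * Qab ?x ?y ^ (m - r) * Qa ?x ?y ^ r)"
            using nz0 nz1 by simp
          then show "(\<Sum>r\<le>m. (c r - coeff P r) * Qab ?x ?y ^ (m - r) * Qa ?x ?y ^ r) = 0"
            by (simp add: left_diff_distrib sum_subtractf)
        qed
        then show ?thesis by simp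
      qed
    qed
  qed
  assume r: "r \<le> m"
  have "coeff P r - (-1)^m * coeff Q (m - r) = 0"
  proof (rule uniq[OF _ r])
    fix k :: nat
    let ?U = "Qab (of_nat k) 1" and ?V = "Qa (of_nat k) 1"
    have "H m P ?U ?V = Phi (Xa * ?U + (-Xalpha) * ?V) (Xb * ?U + (-Xbeta) * ?V) n"
      unfolding P_def m_def using Phi_expand by metis
    also have "\<dots> = Phi ((-1) * (Xalpha * ?V + (-Xa) * ?U)) ((-1) * (Xbeta * ?V + (-Xb) * ?U)) n"
      by (simp add: algebra_simps)
    also have "\<dots> = (-1)^m * Phi (Xalpha * ?V + (-Xa) * ?U) (Xbeta * ?V + (-Xb) * ?U) n"
      unfolding m_def by (rule Phi_hom)
    also have "Phi (Xalpha * ?V + (-Xa) * ?U) (Xbeta * ?V + (-Xb) * ?U) n = H m Q ?V ?U"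
      unfolding Q_def m_def using Phi_expand by metis
    also have "H m Q ?V ?U = (\<Sum>r\<le>m. coeff Q (m - r) * ?U ^ (m - r) * ?V ^ r)"
      unfolding H_def by (subst sum_rev) (auto intro!: sum.cong simp: algebra_simps)
    finally show "(\<Sum>r\<le>m. (coeff P r - (-1)^m * coeff Q (m - r)) * ?U ^ (m - r) * ?V ^ r) = 0"
      by (simp add: H_def left_diff_distrib sum_subtractf sum_distrib_left algebra_simps)
  qed
  then show "coeff P r = (-1)^m * coeff Q (m - r)" by simp
qed



theorem theorem8p4:
  fixes n :: nat
  assumes "n \<ge> 1"
  shows "(\<forall>r \<le> n div 2.
            of_nat (fact r) * PsiBr n r = (-1) ^ r * (L1 ^^ r) (Psi Xa Xb n) \<and>
            of_nat (fact (n div 2 - r)) * PsiBr n r =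
              (-1) ^ r * (L2 ^^ (n div 2 - r)) (Psi Xalpha Xbeta n))
       \<and> (\<forall>r \<le> (n - 1) div 2.
            of_nat (fact r) * PhiBr n r = (-1) ^ r * (L1 ^^ r) (Phi Xa Xb n) \<and>
            of_nat (fact ((n - 1) div 2 - r)) * PhiBr n r =
              (-1) ^ r * (L2 ^^ ((n - 1) div 2 - r)) (Phi Xalpha Xbeta n))"
proof (intro conjI allI impI)
  fix r assume r: "r \<le> n div 2"
  show "of_nat (fact r) * PsiBr n r = (-1) ^ r * (L1 ^^ r) (Psi Xa Xb n)"
    using Psi_main(1) taylor_L1_Psi by metis
  have "of_nat (fact (n div 2 - r)) * PsiBr n r
      = (-1)^(n div 2) * (of_nat (fact (n div 2 - r)) * coeff (Psi [:Xalpha,-Xa:] [:Xbeta,-Xb:] n) (n div 2 - r))"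
    using Psi_main(2)[OF r] Psi_main(1) by (simp add: algebra_simps)
  also have "\<dots> = ((-1)^(n div 2) * (-1)^(n div 2 - r)) * (L2 ^^ (n div 2 - r)) (Psi Xalpha Xbeta n)"
    unfolding taylor_L2_Psi by (simp add: algebra_simps)
  also have "\<dots> = (-1) ^ r * (L2 ^^ (n div 2 - r)) (Psi Xalpha Xbeta n)"
    by (simp only: sign[OF r])
  finally show "of_nat (fact (n div 2 - r)) * PsiBr n r =
              (-1) ^ r * (L2 ^^ (n div 2 - r)) (Psi Xalpha Xbeta n)" .
next
  fix r assume r: "r \<le> (n - 1) div 2"
  show "of_nat (fact r) * PhiBr n r = (-1) ^ r * (L1 ^^ r) (Phi Xa Xb n)"
    using Phi_main(1) taylor_L1_Phi by metis
  have "of_nat (fact ((n - 1) div 2 - r)) * PhiBr n r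
      = (-1)^((n - 1) div 2) * (of_nat (fact ((n - 1) div 2 - r)) * coeff (Phi [:Xalpha,-Xa:] [:Xbeta,-Xb:] n) ((n - 1) div 2 - r))"
    using Phi_main(2)[OF r] Phi_main(1) by (simp add: algebra_simps)
  also have "\<dots> = ((-1)^((n - 1) div 2) * (-1)^((n - 1) div 2 - r)) * (L2 ^^ ((n - 1) div 2 - r)) (Phi Xalpha Xbeta n)"
    unfolding taylor_L2_Phi by (simp add: algebra_simps)
  also have "\<dots> = (-1) ^ r * (L2 ^^ ((n - 1) div 2 - r)) (Phi Xalpha Xbeta n)"
    by (simp only: sign[OF r])
  finally show "of_nat (fact ((n - 1) div 2 - r)) * PhiBr n r =
              (-1) ^ r * (L2 ^^ ((n - 1) div 2 - r)) (Phi Xalpha Xbeta n)" .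
qed

end
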